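(* Let $\mathcal{A}$ be a finite abelian group with $|\mathcal{A}|\ge 3$. Let $M_9(p_1,p_2)$ be the graph consisting of two triangles $v_1v_3v_4$ and $v_1v_5v_6$ sharing the vertex $v_1$, a vertex $v_2$ adjacent to $v_1$, $p_1\ge 0$ pendant vertices adjacent to $v_1$, and $p_2\ge 1$ pendant vertices adjacent to $v_2$. Then $M_9(p_1,p_2)$ is $\mathcal{A}$-vertex magic if and only if $p_1=0$ and there exist distinct elements $g,h\in\mathcal{A}\setminus\{0\}$ with $4(g-h)=0$.
   Context: A map $\ell:V(G)\to\mathcal{A}\setminus\{0\}$ is an $\mathcal{A}$-vertex magic labeling if there is $\mu\in\mathcal{A}$ with $\sum_{u\in N(v)}\ell(u)=\mu$ for every vertex $v$; $G$ is $\mathcal{A}$-vertex magic if such a labeling exists. A pendant vertex has degree $1$. *)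

theory Defs
  imports Main
begin

definition vertex_magic_labeling ::
  "'v set \<Rightarrow> ('v \<Rightarrow> 'v \<Rightarrow> bool) \<Rightarrow> ('v \<Rightarrow> 'a::ab_group_add) \<Rightarrow> bool" where
  "vertex_magic_labeling Vs adj l \<longleftrightarrow>
     (\<forall>v\<in>Vs. l v \<noteq> 0) \<and>
     (\<exists>\<mu>. \<forall>v\<in>Vs. (\<Sum>u\<in>{u\<in>Vs. adj v u}. l u) = \<mu>)"

definition is_vertex_magic ::
  "'a::ab_group_add itself \<Rightarrow> 'v set \<Rightarrow> ('v \<Rightarrow> 'v \<Rightarrow> bool) \<Rightarrow> bool" where
  "is_vertex_magic _ Vs adj \<longleftrightarrow> (\<exists>l::'v \<Rightarrow> 'a. vertex_magic_labeling Vs adj l)"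

text \<open>Vertices of M_9(p1,p2): V i (i = 1..6) are v_1..v_6, P1 i (i < p1) are the
pendants at v_1, P2 i (i < p2) are the pendants at v_2.\<close>

datatype m9v = V nat | P1 nat | P2 nat

definition m9_verts :: "nat \<Rightarrow> nat \<Rightarrow> m9v set" where
  "m9_verts p1 p2 = V ` {1..6} \<union> P1 ` {..<p1} \<union> P2 ` {..<p2}"

definition m9_edges :: "nat \<Rightarrow> nat \<Rightarrow> (m9v \<times> m9v) set" where
  "m9_edges p1 p2 =
     {(V 1, V 3), (V 1, V 4), (V 3, V 4), (V 1, V 5), (V 1, V 6), (V 5, V 6), (V 1, V 2)}
     \<union> (\<lambda>i. (V 1, P1 i)) ` {..<p1} \<union> (\<lambda>i. (V 2, P2 i)) ` {..<p2}"

definition m9_adj :: "nat \<Rightarrow> nat \<Rightarrow> m9v \<Rightarrow> m9v \<Rightarrow> bool" where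
  "m9_adj p1 p2 u v \<longleftrightarrow> (u, v) \<in> m9_edges p1 p2 \<or> (v, u) \<in> m9_edges p1 p2"

end

theory Submission
  imports Defs
begin

lemma nV1: "{u \<in> m9_verts p1 p2. m9_adj p1 p2 (V 1) u} = {V 2, V 3, V 4, V 5, V 6} \<union> P1 ` {..<p1}"
  by (auto simp: m9_verts_def m9_adj_def m9_edges_def)
lemma nV2: "{u \<in> m9_verts p1 p2. m9_adj p1 p2 (V 2) u} = insert (V 1) (P2 ` {..<p2})"
  by (auto simp: m9_verts_def m9_adj_def m9_edges_def)
lemma nV3: "{u \<in> m9_verts p1 p2. m9_adj p1 p2 (V 3) u} = {V 1, V 4}"
  by (auto simp: m9_verts_def m9_adj_def m9_edges_def)
lemma nV4: "{u \<in> m9_verts p1 p2. m9_adj p1 p2 (V 4) u} = {V 1, V 3}"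
  by (auto simp: m9_verts_def m9_adj_def m9_edges_def)
lemma nV5: "{u \<in> m9_verts p1 p2. m9_adj p1 p2 (V 5) u} = {V 1, V 6}"
  by (auto simp: m9_verts_def m9_adj_def m9_edges_def)
lemma nV6: "{u \<in> m9_verts p1 p2. m9_adj p1 p2 (V 6) u} = {V 1, V 5}"
  by (auto simp: m9_verts_def m9_adj_def m9_edges_def)
lemma nP1: "i < p1 \<Longrightarrow> {u \<in> m9_verts p1 p2. m9_adj p1 p2 (P1 i) u} = {V 1}"
  by (auto simp: m9_verts_def m9_adj_def m9_edges_def)
lemma nP2: "i < p2 \<Longrightarrow> {u \<in> m9_verts p1 p2. m9_adj p1 p2 (P2 i) u} = {V 2}"
  by (auto simp: m9_verts_def m9_adj_def m9_edges_def)

lemma sV1: "(\<Sum>u\<in>{V 2, V 3, V 4, V 5, V 6} \<union> P1 ` {..<p1}. (l u :: 'a::ab_group_add))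
   = l (V 2) + l (V 3) + l (V 4) + l (V 5) + l (V 6) + (\<Sum>i<p1. l (P1 i))"
proof -
  have "(\<Sum>u\<in>{V 2, V 3, V 4, V 5, V 6} \<union> P1 ` {..<p1}. l u)
     = (\<Sum>u\<in>{V 2, V 3, V 4, V 5, V 6}. l u) + (\<Sum>u\<in>P1 ` {..<p1}. l u)"
    by (rule sum.union_disjoint) auto
  also have "(\<Sum>u\<in>P1 ` {..<p1}. l u) = (\<Sum>i<p1. l (P1 i))"
    by (subst sum.reindex) (auto simp: inj_on_def)
  finally show ?thesis by (simp add: add.assoc)
qed

lemma sV2: "(\<Sum>u\<in>insert (V 1) (P2 ` {..<p2}). (l u :: 'a::ab_group_add))
   = l (V 1) + (\<Sum>i<p2. l (P2 i))"
proof -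
  have "(\<Sum>u\<in>insert (V 1) (P2 ` {..<p2}). l u) = l (V 1) + (\<Sum>u\<in>P2 ` {..<p2}. l u)"
    by (rule sum.insert) auto
  also have "(\<Sum>u\<in>P2 ` {..<p2}. l u) = (\<Sum>i<p2. l (P2 i))"
    by (subst sum.reindex) (auto simp: inj_on_def)
  finally show ?thesis .
qed

lemma verts: "v \<in> m9_verts p1 p2 \<longleftrightarrow>
   (v \<in> {V 1, V 2, V 3, V 4, V 5, V 6} \<or> (\<exists>i<p1. v = P1 i) \<or> (\<exists>i<p2. v = P2 i))"
  by (auto simp: m9_verts_def)

lemma split_sum:
  fixes s :: "'a::{finite, ab_group_add}" and p2 :: nat
  assumes "card (UNIV :: 'a set) \<ge> 3" "p2 \<ge> 1" "s \<noteq> 0"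
  shows "\<exists>f. (\<forall>i<p2. f i \<noteq> 0) \<and> (\<Sum>i<p2. f i) = s"
proof (cases "p2 = 1")
  case True
  have "{..<p2} = {0}" using True by auto
  then have "(\<Sum>i<p2. s) = s" by simp
  then show ?thesis using assms by (intro exI[of _ "\<lambda>_. s"]) auto
next
  case False
  then have p2: "p2 \<ge> 2" using assms by auto
  define t where "t = s - (\<Sum>i\<in>{2..<p2}. s)"
  have "\<exists>x. x \<notin> {0, t}"
  proof (rule ccontr)
    assume "\<not> ?thesis"
    then have "UNIV \<subseteq> {0, t}" by auto
    then have "card (UNIV :: 'a set) \<le> card {0, t}" by (intro card_mono) auto
    also have "\<dots> \<le> 2" by (simp add: card_insert_le_m1)
    finally show False using assms by simp
  qed
  then obtain x where x: "x \<noteq> 0" "x \<noteq> t" by auto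
  define f where "f i = (if i = 0 then x else if i = 1 then t - x else s)" for i :: nat
  have "{..<p2} = {0, 1} \<union> {2..<p2}" using p2 by auto
  then have "(\<Sum>i<p2. f i) = (\<Sum>i\<in>{0,1}. f i) + (\<Sum>i\<in>{2..<p2}. f i)"
    by (simp add: sum.union_disjoint)
  also have "(\<Sum>i\<in>{2..<p2}. f i) = (\<Sum>i\<in>{2..<p2}. s)"
    by (rule sum.cong) (auto simp: f_def)
  finally have "(\<Sum>i<p2. f i) = s" by (simp add: f_def t_def)
  moreover have "\<forall>i<p2. f i \<noteq> 0" using x assms by (auto simp: f_def)
  ultimately show ?thesis by blast
qed

theorem proposition4p8:
  fixes p1 p2 :: nat
  assumes "card (UNIV :: ('a::{finite, ab_group_add}) set) \<ge> 3"
    and "p2 \<ge> 1"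
  shows "is_vertex_magic TYPE('a) (m9_verts p1 p2) (m9_adj p1 p2) \<longleftrightarrow>
         (p1 = 0 \<and> (\<exists>g h :: 'a. g \<noteq> 0 \<and> h \<noteq> 0 \<and> g \<noteq> h \<and>
             (g - h) + (g - h) + (g - h) + (g - h) = 0))"
proof
  assume "is_vertex_magic TYPE('a) (m9_verts p1 p2) (m9_adj p1 p2)"
  then obtain l :: "m9v \<Rightarrow> 'a" and \<mu> where nz: "\<forall>v\<in>m9_verts p1 p2. l v \<noteq> 0"
    and mg: "\<forall>v\<in>m9_verts p1 p2. (\<Sum>u\<in>{u\<in>m9_verts p1 p2. m9_adj p1 p2 v u}. l u) = \<mu>"
    unfolding is_vertex_magic_def vertex_magic_labeling_def by blast
  have e1: "l (V 2) + l (V 3) + l (V 4) + l (V 5) + l (V 6) + (\<Sum>i<p1. l (P1 i)) = \<mu>"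
    using mg[rule_format, of "V 1"] unfolding nV1 sV1 by (simp add: verts)
  have e2: "l (V 2) = \<mu>"
    using mg[rule_format, of "P2 0"] assms(2) unfolding nP2[OF order.strict_trans2[OF zero_less_one assms(2)]] by (simp add: verts)
  have e3: "l (V 1) + l (V 4) = \<mu>" using mg[rule_format, of "V 3"] unfolding nV3 by (simp add: verts)
  have e4: "l (V 1) + l (V 3) = \<mu>" using mg[rule_format, of "V 4"] unfolding nV4 by (simp add: verts)
  have e5: "l (V 1) + l (V 6) = \<mu>" using mg[rule_format, of "V 5"] unfolding nV5 by (simp add: verts)
  have e6: "l (V 1) + l (V 5) = \<mu>" using mg[rule_format, of "V 6"] unfolding nV6 by (simp add: verts)
  have n1: "l (V 1) \<noteq> 0" and n3: "l (V 3) \<noteq> 0" using nz by (auto simp: verts)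
  have p10: "p1 = 0"
  proof (rule ccontr)
    assume "p1 \<noteq> 0"
    then have p: "0 < p1" by simp
    then have "l (V 1) = \<mu>" using mg[rule_format, of "P1 0"] unfolding nP1[OF p] by (simp add: verts)
    then show False using e4 n3 by simp
  qed
  have "(\<mu> - l (V 1)) + (\<mu> - l (V 1)) + (\<mu> - l (V 1)) + (\<mu> - l (V 1)) = 0"
  proof -
    have a: "l (V 3) = \<mu> - l (V 1)" "l (V 4) = \<mu> - l (V 1)" "l (V 5) = \<mu> - l (V 1)"
      "l (V 6) = \<mu> - l (V 1)" using e3 e4 e5 e6 by (auto simp: algebra_simps)
    show ?thesis using e1 e2 p10 unfolding a by (simp add: algebra_simps)
  qed
  moreover have "\<mu> \<noteq> 0" using e2 nz by (auto simp: verts)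
  moreover have "\<mu> \<noteq> l (V 1)" using e4 n3 by auto
  ultimately show "p1 = 0 \<and> (\<exists>g h :: 'a. g \<noteq> 0 \<and> h \<noteq> 0 \<and> g \<noteq> h \<and>
             (g - h) + (g - h) + (g - h) + (g - h) = 0)" using p10 n1 by blast
next
  assume "p1 = 0 \<and> (\<exists>g h :: 'a. g \<noteq> 0 \<and> h \<noteq> 0 \<and> g \<noteq> h \<and>
             (g - h) + (g - h) + (g - h) + (g - h) = 0)"
  then obtain g h :: 'a where p10: "p1 = 0" and g: "g \<noteq> 0" and h: "h \<noteq> 0" and gh: "g \<noteq> h"
    and four: "(g - h) + (g - h) + (g - h) + (g - h) = 0" by blast
  obtain f where f: "\<forall>i<p2. f i \<noteq> (0::'a)" "(\<Sum>i<p2. f i) = g - h"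
    using split_sum[OF assms, of "g - h"] gh by auto
  define l where "l v = (case v of V n \<Rightarrow> (if n = 1 then h else if n = 2 then g else g - h)
     | P1 i \<Rightarrow> g | P2 i \<Rightarrow> f i)" for v
  have "vertex_magic_labeling (m9_verts p1 p2) (m9_adj p1 p2) l"
    unfolding vertex_magic_labeling_def
  proof (intro conjI exI[of _ g] ballI)
    fix v assume "v \<in> m9_verts p1 p2"
    then show "l v \<noteq> 0" using g h gh f by (auto simp: verts l_def)
  next
    fix v assume "v \<in> m9_verts p1 p2"
    have sP2: "(\<Sum>i<p2. l (P2 i)) = g - h" using f by (simp add: l_def)
    let ?S = "\<lambda>v. (\<Sum>u\<in>{u\<in>m9_verts p1 p2. m9_adj p1 p2 v u}. l u)"
    have "?S (V 1) = g" using p10 four unfolding nV1 sV1 by (simp add: l_def algebra_simps)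
    moreover have "?S (V 2) = g" using sP2 unfolding nV2 sV2 by (simp add: l_def algebra_simps)
    moreover have "?S (V 3) = g" unfolding nV3 by (simp add: l_def)
    moreover have "?S (V 4) = g" unfolding nV4 by (simp add: l_def)
    moreover have "?S (V 5) = g" unfolding nV5 by (simp add: l_def)
    moreover have "?S (V 6) = g" unfolding nV6 by (simp add: l_def)
    moreover have "\<forall>i<p2. ?S (P2 i) = g"
    proof (intro allI impI)
      fix i assume i: "i < p2"
      show "?S (P2 i) = g" unfolding nP2[OF i] by (simp add: l_def)
    qed
    ultimately show "?S v = g" using \<open>v \<in> m9_verts p1 p2\<close> p10 unfolding verts by auto
  qed
  then show "is_vertex_magic TYPE('a) (m9_verts p1 p2) (m9_adj p1 p2)"
    unfolding is_vertex_magic_def by blast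
qed

end
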